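(* Let $G$ be a finite GVZ-group with $|\mathrm{cd}(G)|=2$, and let $\{X_1,\dots,X_n\}=\{Z(\psi):\psi\in\mathrm{nl}(G)\}$ be the collection of centres of non-linear irreducible characters of $G$. Let $\chi\in\mathrm{nl}(G)$ and $1\le i\le n$. Then $Z(\chi)=X_i$ if and only if $[X_i,G]\subseteq\ker\chi$.
   Context: All groups are finite. $\mathrm{Irr}(G)$ is the set of complex irreducible characters of $G$, $\mathrm{nl}(G)$ the set of non-linear irreducible characters, and $\mathrm{cd}(G)=\{\chi(1):\chi\in\mathrm{Irr}(G)\}$. For a character $\chi$, $Z(\chi)=\{g\in G: |\chi(g)|=\chi(1)\}$. A nonabelian group $G$ is a GVZ-group if for every $\chi\in\mathrm{Irr}(G)$ we have $\chi(g)=0$ for all $g\in G\setminus Z(\chi)$. *)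

theory Defs
  imports "HOL-Algebra.Generated_Groups" "Jordan_Normal_Form.Matrix"
begin

definition is_rep :: "('a, 'b) monoid_scheme \<Rightarrow> nat \<Rightarrow> ('a \<Rightarrow> complex mat) \<Rightarrow> bool" where
  "is_rep G n \<rho> \<longleftrightarrow> 0 < n \<and> (\<forall>g\<in>carrier G. \<rho> g \<in> carrier_mat n n)
     \<and> \<rho> \<one>\<^bsub>G\<^esub> = 1\<^sub>m n
     \<and> (\<forall>x\<in>carrier G. \<forall>y\<in>carrier G. \<rho> (x \<otimes>\<^bsub>G\<^esub> y) = \<rho> x * \<rho> y)"

definition nontriv_invariant_subspace ::
  "('a, 'b) monoid_scheme \<Rightarrow> nat \<Rightarrow> ('a \<Rightarrow> complex mat) \<Rightarrow> complex vec set \<Rightarrow> bool" where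
  "nontriv_invariant_subspace G n \<rho> W \<longleftrightarrow>
     W \<subseteq> carrier_vec n \<and> 0\<^sub>v n \<in> W
     \<and> (\<forall>v\<in>W. \<forall>w\<in>W. v + w \<in> W) \<and> (\<forall>c. \<forall>w\<in>W. c \<cdot>\<^sub>v w \<in> W)
     \<and> W \<noteq> {0\<^sub>v n} \<and> W \<noteq> carrier_vec n
     \<and> (\<forall>g\<in>carrier G. \<forall>w\<in>W. \<rho> g *\<^sub>v w \<in> W)"

definition irreducible_rep :: "('a, 'b) monoid_scheme \<Rightarrow> nat \<Rightarrow> ('a \<Rightarrow> complex mat) \<Rightarrow> bool" where
  "irreducible_rep G n \<rho> \<longleftrightarrow> is_rep G n \<rho> \<and> \<not> (\<exists>W. nontriv_invariant_subspace G n \<rho> W)"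

definition mat_trace :: "complex mat \<Rightarrow> complex" where
  "mat_trace A = (\<Sum>i<dim_row A. A $$ (i, i))"

definition Irr :: "('a, 'b) monoid_scheme \<Rightarrow> ('a \<Rightarrow> complex) set" where
  "Irr G = {\<chi>. \<exists>n \<rho>. irreducible_rep G n \<rho> \<and>
              \<chi> = (\<lambda>g. if g \<in> carrier G then mat_trace (\<rho> g) else 0)}"

definition nl :: "('a, 'b) monoid_scheme \<Rightarrow> ('a \<Rightarrow> complex) set" where
  "nl G = {\<chi> \<in> Irr G. \<chi> \<one>\<^bsub>G\<^esub> \<noteq> 1}"

definition cd :: "('a, 'b) monoid_scheme \<Rightarrow> complex set" where
  "cd G = (\<lambda>\<chi>. \<chi> \<one>\<^bsub>G\<^esub>) ` Irr G"

definition Zchar :: "('a, 'b) monoid_scheme \<Rightarrow> ('a \<Rightarrow> complex) \<Rightarrow> 'a set" where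
  "Zchar G \<chi> = {g \<in> carrier G. cmod (\<chi> g) = cmod (\<chi> \<one>\<^bsub>G\<^esub>)}"

definition kerchar :: "('a, 'b) monoid_scheme \<Rightarrow> ('a \<Rightarrow> complex) \<Rightarrow> 'a set" where
  "kerchar G \<chi> = {g \<in> carrier G. \<chi> g = \<chi> \<one>\<^bsub>G\<^esub>}"

definition commutator_sub :: "('a, 'b) monoid_scheme \<Rightarrow> 'a set \<Rightarrow> 'a set" where
  "commutator_sub G X = generate G
     {inv\<^bsub>G\<^esub> x \<otimes>\<^bsub>G\<^esub> inv\<^bsub>G\<^esub> g \<otimes>\<^bsub>G\<^esub> x \<otimes>\<^bsub>G\<^esub> g | x g. x \<in> X \<and> g \<in> carrier G}"

definition GVZ :: "('a, 'b) monoid_scheme \<Rightarrow> bool" where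
  "GVZ G \<longleftrightarrow> (\<exists>x\<in>carrier G. \<exists>y\<in>carrier G. x \<otimes>\<^bsub>G\<^esub> y \<noteq> y \<otimes>\<^bsub>G\<^esub> x)
     \<and> (\<forall>\<chi>\<in>Irr G. \<forall>g\<in>carrier G - Zchar G \<chi>. \<chi> g = 0)"

end

theory Submission
  imports Defs "HOL-Algebra.Multiplicative_Group" "Jordan_Normal_Form.Jordan_Normal_Form_Existence" "Jordan_Normal_Form.Spectral_Radius"
begin

lemma rep_carrier:
  assumes "is_rep G n \<rho>" "g \<in> carrier G"
  shows "\<rho> g \<in> carrier_mat n n"
  using assms unfolding is_rep_def by auto

lemma rep_mult:
  assumes "is_rep G n \<rho>" "x \<in> carrier G" "y \<in> carrier G"
  shows "\<rho> (x \<otimes>\<^bsub>G\<^esub> y) = \<rho> x * \<rho> y"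
  using assms unfolding is_rep_def by auto

lemma rep_one:
  assumes "is_rep G n \<rho>"
  shows "\<rho> \<one>\<^bsub>G\<^esub> = 1\<^sub>m n"
  using assms unfolding is_rep_def by auto

lemma rep_inv:
  assumes "group G" "is_rep G n \<rho>" "g \<in> carrier G"
  shows "\<rho> (inv\<^bsub>G\<^esub> g) * \<rho> g = 1\<^sub>m n" "\<rho> g * \<rho> (inv\<^bsub>G\<^esub> g) = 1\<^sub>m n"
proof -
  interpret group G by fact
  show "\<rho> (inv\<^bsub>G\<^esub> g) * \<rho> g = 1\<^sub>m n"
    using rep_mult[OF assms(2) inv_closed[OF assms(3)] assms(3)] rep_one[OF assms(2)] assms(3) by simp
  show "\<rho> g * \<rho> (inv\<^bsub>G\<^esub> g) = 1\<^sub>m n"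
    using rep_mult[OF assms(2) assms(3) inv_closed[OF assms(3)]] rep_one[OF assms(2)] assms(3) by simp
qed

lemma rep_pow:
  assumes "group G" "is_rep G n \<rho>" "g \<in> carrier G"
  shows "\<rho> (g [^]\<^bsub>G\<^esub> (k::nat)) = \<rho> g ^\<^sub>m k"
proof (induction k)
  case 0
  then show ?case using rep_one[OF assms(2)] rep_carrier[OF assms(2,3)] by auto
next
  case (Suc k)
  interpret group G by fact
  have "\<rho> (g [^]\<^bsub>G\<^esub> Suc k) = \<rho> (g [^]\<^bsub>G\<^esub> k \<otimes>\<^bsub>G\<^esub> g)" by simp
  also have "\<dots> = \<rho> (g [^]\<^bsub>G\<^esub> k) * \<rho> g" using rep_mult[OF assms(2)] assms(3) by simp
  finally show ?case using Suc by simp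
qed

lemma rep_order_pow:
  assumes "group G" "finite (carrier G)" "is_rep G n \<rho>" "g \<in> carrier G"
  shows "\<rho> g ^\<^sub>m Coset.order G = 1\<^sub>m n" "Coset.order G > 0"
proof -
  interpret group G by fact
  show "\<rho> g ^\<^sub>m Coset.order G = 1\<^sub>m n"
    using rep_pow[OF assms(1,3,4), of "Coset.order G"] pow_order_eq_1[OF assms(4)] rep_one[OF assms(3)] by simp
  show "Coset.order G > 0" using order_gt_0_iff_finite assms(2) by blast
qed

lemma mat_trace_comm:
  assumes "A \<in> carrier_mat n m" "B \<in> carrier_mat m n"
  shows "mat_trace (A * B) = mat_trace (B * A)"
proof -
  have "mat_trace (A * B) = (\<Sum>i<n. \<Sum>k<m. A $$ (i,k) * B $$ (k,i))"
    using assms by (simp add: mat_trace_def scalar_prod_def atLeast0LessThan)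
  also have "\<dots> = (\<Sum>k<m. \<Sum>i<n. B $$ (k,i) * A $$ (i,k))"
    by (subst sum.swap) (simp add: mult.commute)
  also have "\<dots> = mat_trace (B * A)"
    using assms by (simp add: mat_trace_def scalar_prod_def atLeast0LessThan)
  finally show ?thesis .
qed

lemma mat_trace_smult_one: "mat_trace (c \<cdot>\<^sub>m 1\<^sub>m n) = of_nat n * c"
  by (simp add: mat_trace_def)

lemma sum_lessThan_add: "(\<Sum>i<k+N. f i) = (\<Sum>i<k. f i) + (\<Sum>i<N. f (k+i::nat))"
proof -
  have "(\<Sum>i<k+N. f i) = sum f {0..<k} + sum f {k..<k+N}"
    by (simp add: lessThan_atLeast0 sum.atLeastLessThan_concat)
  also have "sum f {k..<k+N} = sum (f \<circ> plus k) {0..<N}"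
    using sum.atLeastLessThan_shift_bounds[of f 0 k N] by (simp add: add.commute)
  finally show ?thesis by (simp add: lessThan_atLeast0)
qed

lemma mat_trace_four_block:
  assumes "A \<in> carrier_mat k k" "D \<in> carrier_mat N N"
  shows "mat_trace (four_block_mat A B C D) = mat_trace A + mat_trace D"
proof -
  have "mat_trace (four_block_mat A B C D) = (\<Sum>i<k+N. four_block_mat A B C D $$ (i,i))"
    using assms by (simp add: mat_trace_def)
  also have "\<dots> = (\<Sum>i<k. four_block_mat A B C D $$ (i,i)) + (\<Sum>i<N. four_block_mat A B C D $$ (k+i,k+i))"
    by (rule sum_lessThan_add)
  also have "\<dots> = mat_trace A + mat_trace D" using assms by (simp add: mat_trace_def)
  finally show ?thesis .
qed

section \<open>Jordan matrices of finite order\<close>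

lemma jordan_pow_one:
  assumes "0 \<notin> fst ` set n_as" "0 < m"
    "(jordan_matrix n_as) ^\<^sub>m m = 1\<^sub>m (sum_list (map fst n_as))"
  shows "\<forall>(k,a)\<in>set n_as. k = 1 \<and> (a::complex)^m = 1"
  using assms
proof (induction n_as)
  case Nil
  then show ?case by simp
next
  case (Cons ka rest)
  obtain k a where ka: "ka = (k,a)" by force
  define N where "N = sum_list (map fst rest)"
  define Jb where "Jb = jordan_block k a ^\<^sub>m m"
  define Bm where "Bm = jordan_matrix rest ^\<^sub>m m"
  have "jordan_matrix (ka#rest) ^\<^sub>m m = diag_block_mat (Jb # map (\<lambda>(n,a). jordan_block n a ^\<^sub>m m) rest)"
    by (simp add: jordan_matrix_pow ka Jb_def)
  also have "\<dots> = four_block_mat Jb (0\<^sub>m k N) (0\<^sub>m N k) Bm"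
    by (simp add: Let_def jordan_matrix_pow[of rest m, symmetric] Bm_def N_def Jb_def)
  finally have eq: "four_block_mat Jb (0\<^sub>m k N) (0\<^sub>m N k) Bm = 1\<^sub>m (k+N)"
    using Cons.prems(3) by (simp add: ka N_def)
  have dims: "dim_row Jb = k" "dim_col Jb = k" "dim_row Bm = N" "dim_col Bm = N"
    by (simp_all add: Jb_def Bm_def N_def)
  have "Bm = 1\<^sub>m N"
  proof (rule eq_matI)
    fix i j assume ij: "i < dim_row (1\<^sub>m N)" "j < dim_col (1\<^sub>m N)"
    have "four_block_mat Jb (0\<^sub>m k N) (0\<^sub>m N k) Bm $$ (k+i, k+j) = Bm $$ (i,j)"
      using ij dims by simp
    then show "Bm $$ (i,j) = 1\<^sub>m N $$ (i,j)" using ij eq by simp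
  qed (simp_all add: dims)
  then have IH: "\<forall>(k,a)\<in>set rest. k = 1 \<and> a^m = 1"
    using Cons.IH Cons.prems(1,2) by (simp add: Bm_def N_def)
  have k0: "k > 0" using Cons.prems(1) ka by auto
  have "four_block_mat Jb (0\<^sub>m k N) (0\<^sub>m N k) Bm $$ (0,0) = Jb $$ (0,0)"
    using dims k0 by simp
  then have "Jb $$ (0,0) = 1" using eq k0 by simp
  then have am: "a^m = 1" using k0 by (simp add: Jb_def jordan_block_pow)
  have k1: "k = 1"
  proof (rule ccontr)
    assume "k \<noteq> 1"
    then have k2: "1 < k" using k0 by simp
    have "four_block_mat Jb (0\<^sub>m k N) (0\<^sub>m N k) Bm $$ (0,1) = Jb $$ (0,1)"
      using dims k2 by simp
    then have "Jb $$ (0,1) = 0" using eq k2 by simp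
    then have "of_nat m * a ^ (m - 1) = 0" using k2 by (simp add: Jb_def jordan_block_pow)
    then have "a = 0" using Cons.prems(2) by simp
    then show False using am Cons.prems(2) by (simp add: power_0_left)
  qed
  show ?case using IH am k1 ka by simp
qed

lemma all_equal_of_norm:
  fixes f :: "'i \<Rightarrow> complex"
  assumes I: "finite I" and n1: "\<forall>i\<in>I. cmod (f i) = 1" and s: "cmod (sum f I) = real (card I)"
  shows "\<forall>i\<in>I. f i = sum f I / of_nat (card I)"
proof (cases "I = {}")
  case True then show ?thesis by simp
next
  case False
  define S where "S = sum f I"
  define L where "L = real (card I)"
  have L0: "L > 0" using False I by (simp add: L_def card_gt_0_iff)
  have cS: "cmod S = L" using s by (simp add: S_def L_def)
  have le: "Re (cnj S * f i) \<le> L" if "i \<in> I" for i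
  proof -
    have "Re (cnj S * f i) \<le> cmod (cnj S * f i)" by (rule complex_Re_le_cmod)
    also have "\<dots> = L" using n1 that cS by (simp add: norm_mult)
    finally show ?thesis .
  qed
  have "(\<Sum>i\<in>I. Re (cnj S * f i)) = Re (cnj S * S)"
    by (simp add: S_def sum_distrib_left Re_sum)
  also have "\<dots> = Re (S * cnj S)" by (simp add: mult.commute)
  also have "\<dots> = (cmod S)^2" by (simp only: complex_norm_square[symmetric] Re_complex_of_real)
  also have "\<dots> = L * L" using cS by (simp add: power2_eq_square)
  finally have sumeq: "(\<Sum>i\<in>I. Re (cnj S * f i)) = L * L" .
  have "(\<Sum>i\<in>I. L - Re (cnj S * f i)) = 0"
    using sumeq by (simp add: sum_subtractf L_def)
  then have eqL: "\<forall>i\<in>I. Re (cnj S * f i) = L"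
    using le I by (subst (asm) sum_nonneg_eq_0_iff) auto
  show ?thesis
  proof
    fix i assume i: "i \<in> I"
    define z where "z = cnj S * f i"
    have "Re z = L" "cmod z = L" using eqL i n1 cS by (auto simp: z_def norm_mult)
    then have "Im z = 0" by (metis Im_eq_0 abs_norm_cancel)
    then have "z = of_real L" using \<open>Re z = L\<close> by (simp add: complex_eq_iff)
    then have "f i = of_real L / cnj S" using L0 cS z_def by force
    then show "f i = sum f I / of_nat (card I)" using cS L0
      by (smt (verit, ccfv_threshold) S_def complex_cnj_zero_iff
    complex_norm_square frac_eq_eq of_nat_eq_0_iff of_real_mult
    of_real_of_nat_eq power2_eq_square s zero_less_norm_iff)
  qed
qed

lemma jordan_matrix_Cons:
  "jordan_matrix ((k,a)#rest) = four_block_mat (jordan_block k a) (0\<^sub>m k (sum_list (map fst rest)))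
     (0\<^sub>m (sum_list (map fst rest)) k) (jordan_matrix rest)"
proof -
  have "jordan_matrix ((k,a)#rest) = four_block_mat (jordan_block k a) (0\<^sub>m k (dim_col (jordan_matrix rest)))
     (0\<^sub>m (dim_row (jordan_matrix rest)) k) (jordan_matrix rest)"
    by (simp add: jordan_matrix_def Let_def)
  then show ?thesis by simp
qed

lemma jordan_diag_facts:
  assumes "\<forall>(k,a)\<in>set n_as. k = 1"
  shows "sum_list (map fst n_as) = length n_as \<and> mat_trace (jordan_matrix n_as) = sum_list (map snd n_as)"
  using assms
proof (induction n_as)
  case Nil
  then show ?case by (simp add: mat_trace_def jordan_matrix_def)
next
  case (Cons ka rest)
  obtain k a where ka: "ka = (k,a)" by force
  have k1: "k = 1" using Cons.prems ka by auto
  have IH: "sum_list (map fst rest) = length rest \<and> mat_trace (jordan_matrix rest) = sum_list (map snd rest)"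
    using Cons by auto
  have jm: "jordan_matrix (ka#rest) = four_block_mat (jordan_block 1 a)
     (0\<^sub>m 1 (length rest)) (0\<^sub>m (length rest) 1) (jordan_matrix rest)"
    using IH by (simp add: jordan_matrix_Cons ka k1)
  have "mat_trace (jordan_matrix (ka#rest)) = mat_trace (jordan_block 1 a) + mat_trace (jordan_matrix rest)"
  proof -
    have c1: "jordan_block 1 a \<in> carrier_mat 1 1" by simp
    have c2: "jordan_matrix rest \<in> carrier_mat (length rest) (length rest)"
      using jordan_matrix_carrier[of rest] IH by simp
    show ?thesis unfolding jm by (rule mat_trace_four_block[OF c1 c2])
  qed
  also have "mat_trace (jordan_block 1 a) = a" by (simp add: mat_trace_def)
  finally show ?case using IH ka k1 by simp
qed

lemma sum_fst_ones: "\<forall>(k,a)\<in>set xs. k = (1::nat) \<Longrightarrow> sum_list (map fst xs) = length xs"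
  by (induction xs) auto

lemma jordan_scalar:
  fixes c :: complex
  assumes "\<forall>(k,a)\<in>set n_as. k = 1 \<and> a = c"
  shows "jordan_matrix n_as = c \<cdot>\<^sub>m 1\<^sub>m (length n_as)"
  using assms
proof (induction n_as)
  case Nil
  then show ?case by (auto simp: jordan_matrix_def)
next
  case (Cons ka rest)
  have ka: "ka = (1,c)" using Cons.prems by auto
  have IH: "jordan_matrix rest = c \<cdot>\<^sub>m 1\<^sub>m (length rest)" using Cons by auto
  have jm: "jordan_matrix (ka#rest) = four_block_mat (jordan_block 1 c)
     (0\<^sub>m 1 (length rest)) (0\<^sub>m (length rest) 1) (c \<cdot>\<^sub>m 1\<^sub>m (length rest))"
  proof -
    have "sum_list (map fst rest) = length rest"
      using sum_fst_ones[of rest] Cons.prems by auto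
    then show ?thesis using IH by (simp add: jordan_matrix_Cons ka)
  qed
  show ?case unfolding jm
    apply (rule eq_matI)
    subgoal for i j by (cases i; cases j) simp_all
    by simp_all
qed

lemma scalar_of_finite_order:
  fixes A :: "complex mat"
  assumes A: "A \<in> carrier_mat n n" and m: "0 < m" and pow: "A ^\<^sub>m m = 1\<^sub>m n"
    and tr: "cmod (mat_trace A) = real n"
  shows "\<exists>c. A = c \<cdot>\<^sub>m 1\<^sub>m n"
proof -
  obtain as where "char_poly A = (\<Prod>a\<leftarrow>as. [:-a,1:])" using char_poly_factorized[OF A] by auto
  then obtain n_as where jnf: "jordan_nf A n_as" using jordan_nf_exists[OF A] by blast
  define J where "J = jordan_matrix n_as"
  from jnf obtain P Q where wit: "similar_mat_wit A J P Q" and nz: "0 \<notin> fst ` set n_as"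
    unfolding jordan_nf_def similar_mat_def J_def by blast
  have dA: "dim_row A = n" using A by simp
  have Pc: "P \<in> carrier_mat n n" and Qc: "Q \<in> carrier_mat n n" and Jc: "J \<in> carrier_mat n n"
     and PQ: "P * Q = 1\<^sub>m n" and QP: "Q * P = 1\<^sub>m n" and AJ: "A = P * J * Q"
    using wit unfolding similar_mat_wit_def Let_def dA by auto
  have "J ^\<^sub>m m = Q * A ^\<^sub>m m * P"
    using similar_mat_wit_pow_id[OF similar_mat_wit_sym[OF wit], of m] .
  also have "\<dots> = Q * P" unfolding pow using Qc by (simp only: right_mult_one_mat)
  finally have Jpow: "J ^\<^sub>m m = 1\<^sub>m n" using QP by (simp only:)
  have dimJ: "sum_list (map fst n_as) = n" using Jc jordan_matrix_dim(1)[of n_as] unfolding J_def carrier_mat_def by simp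
  have all: "\<forall>(k,a)\<in>set n_as. k = 1 \<and> a^m = 1"
    using jordan_pow_one[OF nz m] Jpow dimJ unfolding J_def by argo
  then have facts: "sum_list (map fst n_as) = length n_as \<and> mat_trace J = sum_list (map snd n_as)"
    using jordan_diag_facts[of n_as] unfolding J_def by fast
  have len: "length n_as = n" using facts dimJ by simp
  have "mat_trace A = mat_trace ((P * J) * Q)" using AJ by simp
  also have "\<dots> = mat_trace (Q * (P * J))" using Pc Qc Jc by (intro mat_trace_comm) auto
  also have "Q * (P * J) = (Q * P) * J" using Pc Qc Jc by (simp only: assoc_mult_mat)
  also have "\<dots> = J" using QP Jc by simp
  finally have trJ: "mat_trace A = mat_trace J" .
  define f where "f i = snd (n_as ! i)" for i
  have sumf: "sum f {..<n} = mat_trace J"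
  proof -
    have "mat_trace J = sum_list (map snd n_as)" using facts by blast
    also have "\<dots> = (\<Sum>i = 0..<length (map snd n_as). map snd n_as ! i)" by (rule sum_list_sum_nth)
    also have "\<dots> = (\<Sum>i<n. f i)" unfolding f_def using len
      by (intro sum.cong) (auto simp: lessThan_atLeast0)
    finally show ?thesis by simp
  qed
  have n1: "\<forall>i\<in>{..<n}. cmod (f i) = 1"
  proof
    fix i assume "i \<in> {..<n}"
    then have mem: "n_as ! i \<in> set n_as" using len nth_mem by auto
    obtain k a where ka: "n_as ! i = (k,a)" by (cases "n_as ! i")
    have "case n_as ! i of (k,a) \<Rightarrow> k = 1 \<and> a^m = 1" using bspec[OF all mem] .
    then have "f i ^ m = 1" using ka unfolding f_def by simp
    then show "cmod (f i) = 1" using m power_eq_1_iff[of "f i" m] by blast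
  qed
  have "\<forall>i\<in>{..<n}. f i = sum f {..<n} / of_nat (card {..<n})"
  proof (rule all_equal_of_norm)
    show "cmod (sum f {..<n}) = real (card {..<n})" unfolding sumf trJ[symmetric] tr by simp
  qed (use n1 in auto)
  then have eqc: "\<forall>i\<in>{..<n}. f i = mat_trace J / of_nat n" using sumf by simp
  define c where "c = mat_trace J / of_nat n"
  have "\<forall>(k,a)\<in>set n_as. k = 1 \<and> a = c"
  proof
    fix ka assume ka: "ka \<in> set n_as"
    then obtain i where i: "i < n" "ka = n_as ! i" using len by (auto simp: in_set_conv_nth)
    have "f i = c" using eqc i(1) by (simp add: c_def)
    obtain k a where kaa: "ka = (k,a)" by (cases ka)
    have "case ka of (k,a) \<Rightarrow> k = 1 \<and> a^m = 1" using bspec[OF all ka] .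
    then have "k = 1" using kaa by simp
    moreover have "a = c" using \<open>f i = c\<close> i(2) kaa unfolding f_def by (metis snd_conv)
    ultimately show "case ka of (k,a) \<Rightarrow> k = 1 \<and> a = c" using kaa by simp
  qed
  then have Jc': "J = c \<cdot>\<^sub>m 1\<^sub>m n" using jordan_scalar len J_def by auto
  have "A = (P * (c \<cdot>\<^sub>m 1\<^sub>m n)) * Q" using AJ Jc' by simp
  also have "P * (c \<cdot>\<^sub>m 1\<^sub>m n) = c \<cdot>\<^sub>m P"
    using mult_smult_distrib[OF Pc one_carrier_mat, of c] Pc by simp
  also have "(c \<cdot>\<^sub>m P) * Q = c \<cdot>\<^sub>m (P * Q)" using mult_smult_assoc_mat[OF Pc Qc] .
  finally show ?thesis using PQ by auto
qed

section \<open>Schur's lemma\<close>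

lemma schur_lemma:
  fixes A :: "complex mat"
  assumes irr: "irreducible_rep G n \<rho>" and A: "A \<in> carrier_mat n n"
    and comm: "\<And>g. g \<in> carrier G \<Longrightarrow> A * \<rho> g = \<rho> g * A"
  shows "\<exists>c. A = c \<cdot>\<^sub>m 1\<^sub>m n"
proof -
  have rep: "is_rep G n \<rho>" and noW: "\<not>(\<exists>W. nontriv_invariant_subspace G n \<rho> W)"
    using irr unfolding irreducible_rep_def by auto
  have n0: "0 < n" using rep unfolding is_rep_def by auto
  obtain c where "c \<in> spectrum A" using spectrum_non_empty[OF A n0] by auto
  then obtain v where ev: "eigenvector A v c" unfolding spectrum_def eigenvalue_def by auto
  have v: "v \<in> carrier_vec n" "v \<noteq> 0\<^sub>v n" "A *\<^sub>v v = c \<cdot>\<^sub>v v"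
    using ev A unfolding eigenvector_def by auto
  define W where "W = {w \<in> carrier_vec n. A *\<^sub>v w = c \<cdot>\<^sub>v w}"
  have "W = carrier_vec n"
  proof (rule ccontr)
    assume ne: "W \<noteq> carrier_vec n"
    have "nontriv_invariant_subspace G n \<rho> W"
      unfolding nontriv_invariant_subspace_def
    proof (intro conjI ballI allI)
      show "W \<subseteq> carrier_vec n" by (auto simp: W_def)
      show "0\<^sub>v n \<in> W" unfolding W_def using A by (auto intro!: eq_vecI)
      show "W \<noteq> {0\<^sub>v n}" using v unfolding W_def by auto
      show "W \<noteq> carrier_vec n" by fact
    next
      fix x y assume x: "x \<in> W" and y: "y \<in> W"
      then have xc: "x \<in> carrier_vec n" and yc: "y \<in> carrier_vec n" by (auto simp: W_def)
      have "A *\<^sub>v (x + y) = A *\<^sub>v x + A *\<^sub>v y" using mult_add_distrib_mat_vec[OF A xc yc] .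
      also have "\<dots> = c \<cdot>\<^sub>v x + c \<cdot>\<^sub>v y" using x y by (simp add: W_def)
      also have "\<dots> = c \<cdot>\<^sub>v (x + y)" using smult_add_distrib_vec[OF xc yc] by simp
      finally show "x + y \<in> W" using xc yc by (simp add: W_def)
    next
      fix d x assume x: "x \<in> W"
      then have xc: "x \<in> carrier_vec n" by (auto simp: W_def)
      have "A *\<^sub>v (d \<cdot>\<^sub>v x) = d \<cdot>\<^sub>v (A *\<^sub>v x)" using mult_mat_vec[OF A xc] .
      also have "\<dots> = d \<cdot>\<^sub>v (c \<cdot>\<^sub>v x)" using x by (simp add: W_def)
      also have "\<dots> = c \<cdot>\<^sub>v (d \<cdot>\<^sub>v x)" by (simp add: smult_smult_assoc mult.commute)
      finally show "d \<cdot>\<^sub>v x \<in> W" using xc by (simp add: W_def)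
    next
      fix g x assume g: "g \<in> carrier G" and x: "x \<in> W"
      then have xc: "x \<in> carrier_vec n" by (auto simp: W_def)
      have rg: "\<rho> g \<in> carrier_mat n n" using rep_carrier[OF rep g] .
      have "A *\<^sub>v (\<rho> g *\<^sub>v x) = (A * \<rho> g) *\<^sub>v x" using A rg xc by simp
      also have "\<dots> = (\<rho> g * A) *\<^sub>v x" using comm[OF g] by simp
      also have "\<dots> = \<rho> g *\<^sub>v (A *\<^sub>v x)" using A rg xc by simp
      also have "\<dots> = \<rho> g *\<^sub>v (c \<cdot>\<^sub>v x)" using x by (simp add: W_def)
      also have "\<dots> = c \<cdot>\<^sub>v (\<rho> g *\<^sub>v x)" using mult_mat_vec[OF rg xc] .
      finally show "\<rho> g *\<^sub>v x \<in> W" using rg xc by (simp add: W_def)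
    qed
    then show False using noW by blast
  qed
  then have all: "\<And>w. w \<in> carrier_vec n \<Longrightarrow> A *\<^sub>v w = c \<cdot>\<^sub>v w" by (auto simp: W_def)
  have "A = c \<cdot>\<^sub>m 1\<^sub>m n"
  proof (rule eq_matI)
    fix i j assume i: "i < dim_row (c \<cdot>\<^sub>m 1\<^sub>m n)" and j: "j < dim_col (c \<cdot>\<^sub>m 1\<^sub>m n)"
    then have i': "i < n" and j': "j < n" by auto
    have "A $$ (i,j) = (A *\<^sub>v unit_vec n j) $ i" using A i' j' by simp
    also have "\<dots> = (c \<cdot>\<^sub>v unit_vec n j) $ i" using all[of "unit_vec n j"] by simp
    also have "\<dots> = (c \<cdot>\<^sub>m 1\<^sub>m n) $$ (i,j)" using i' j' by simp
    finally show "A $$ (i,j) = (c \<cdot>\<^sub>m 1\<^sub>m n) $$ (i,j)" .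
  qed (use A in auto)
  then show ?thesis by blast
qed

section \<open>Orthogonality\<close>

lemma mult_entry:
  assumes "A \<in> carrier_mat n n" "B \<in> carrier_mat n n" "i < n" "j < n"
  shows "(A * B) $$ (i,j) = (\<Sum>p<n. A $$ (i,p) * B $$ (p,j))"
  using assms by (simp add: scalar_prod_def lessThan_atLeast0)

lemma orth_key:
  assumes grp: "group G" and fin: "finite (carrier G)" and irr: "irreducible_rep G n \<rho>"
    and jk: "j < n" "k < n"
  shows "\<And>i l. i < n \<Longrightarrow> l < n \<Longrightarrow> (\<Sum>g\<in>carrier G. \<rho> g $$ (i,j) * \<rho> (inv\<^bsub>G\<^esub> g) $$ (k,l))
     = (if i = l \<and> k = j then of_nat (card (carrier G)) / of_nat n else 0)"
proof -
  interpret group G by fact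
  have rep: "is_rep G n \<rho>" using irr unfolding irreducible_rep_def by auto
  have n0: "0 < n" using rep unfolding is_rep_def by auto
  note rc = rep_carrier[OF rep]
  define S where "S i l = (\<Sum>g\<in>carrier G. \<rho> g $$ (i,j) * \<rho> (inv\<^bsub>G\<^esub> g) $$ (k,l))" for i l
  define T where "T = mat n n (\<lambda>(i,l). S i l)"
  have Tc: "T \<in> carrier_mat n n" by (simp add: T_def)
  have comm: "T * \<rho> h = \<rho> h * T" if h: "h \<in> carrier G" for h
  proof (rule eq_matI)
    fix i l assume "i < dim_row (\<rho> h * T)" "l < dim_col (\<rho> h * T)"
    then have i: "i < n" and l: "l < n" using rc[OF h] Tc by auto
    have "(\<rho> h * T) $$ (i,l) = (\<Sum>p<n. \<rho> h $$ (i,p) * S p l)"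
      using mult_entry[OF rc[OF h] Tc i l] l by (simp add: T_def cong: sum.cong_simp)
    also have "\<dots> = (\<Sum>g\<in>carrier G. (\<Sum>p<n. \<rho> h $$ (i,p) * \<rho> g $$ (p,j)) * \<rho> (inv\<^bsub>G\<^esub> g) $$ (k,l))"
      unfolding S_def by (simp add: sum_distrib_left sum_distrib_right mult.assoc sum.swap[of _ "{..<n}"])
    also have "\<dots> = (\<Sum>g\<in>carrier G. \<rho> (h \<otimes>\<^bsub>G\<^esub> g) $$ (i,j) * \<rho> (inv\<^bsub>G\<^esub> g) $$ (k,l))"
    proof (rule sum.cong[OF refl])
      fix g assume g: "g \<in> carrier G"
      show "(\<Sum>p<n. \<rho> h $$ (i,p) * \<rho> g $$ (p,j)) * \<rho> (inv\<^bsub>G\<^esub> g) $$ (k,l)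
          = \<rho> (h \<otimes>\<^bsub>G\<^esub> g) $$ (i,j) * \<rho> (inv\<^bsub>G\<^esub> g) $$ (k,l)"
        using rep_mult[OF rep h g] mult_entry[OF rc[OF h] rc[OF g] i jk(1)] by simp
    qed
    finally have L: "(\<rho> h * T) $$ (i,l) = (\<Sum>g\<in>carrier G. \<rho> (h \<otimes>\<^bsub>G\<^esub> g) $$ (i,j) * \<rho> (inv\<^bsub>G\<^esub> g) $$ (k,l))" .
    have "(T * \<rho> h) $$ (i,l) = (\<Sum>q<n. S i q * \<rho> h $$ (q,l))"
      using mult_entry[OF Tc rc[OF h] i l] i by (simp add: T_def cong: sum.cong_simp)
    also have "\<dots> = (\<Sum>g\<in>carrier G. \<rho> g $$ (i,j) * (\<Sum>q<n. \<rho> (inv\<^bsub>G\<^esub> g) $$ (k,q) * \<rho> h $$ (q,l)))"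
      unfolding S_def by (simp add: sum_distrib_left sum_distrib_right mult.assoc sum.swap[of _ "{..<n}"])
    also have "\<dots> = (\<Sum>g\<in>carrier G. \<rho> g $$ (i,j) * \<rho> (inv\<^bsub>G\<^esub> g \<otimes>\<^bsub>G\<^esub> h) $$ (k,l))"
    proof (rule sum.cong[OF refl])
      fix g assume g: "g \<in> carrier G"
      show "\<rho> g $$ (i,j) * (\<Sum>q<n. \<rho> (inv\<^bsub>G\<^esub> g) $$ (k,q) * \<rho> h $$ (q,l))
          = \<rho> g $$ (i,j) * \<rho> (inv\<^bsub>G\<^esub> g \<otimes>\<^bsub>G\<^esub> h) $$ (k,l)"
        using rep_mult[OF rep inv_closed[OF g] h] mult_entry[OF rc[OF inv_closed[OF g]] rc[OF h] jk(2) l] by simp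
    qed
    also have "\<dots> = (\<Sum>g\<in>(\<lambda>x. h \<otimes>\<^bsub>G\<^esub> x) ` carrier G. \<rho> g $$ (i,j) * \<rho> (inv\<^bsub>G\<^esub> g \<otimes>\<^bsub>G\<^esub> h) $$ (k,l))"
      using surj_const_mult[OF h] by simp
    also have "\<dots> = (\<Sum>g\<in>carrier G. \<rho> (h \<otimes>\<^bsub>G\<^esub> g) $$ (i,j) * \<rho> (inv\<^bsub>G\<^esub> (h \<otimes>\<^bsub>G\<^esub> g) \<otimes>\<^bsub>G\<^esub> h) $$ (k,l))"
      by (subst sum.reindex) (auto simp: inj_on_def h)
    also have "\<dots> = (\<Sum>g\<in>carrier G. \<rho> (h \<otimes>\<^bsub>G\<^esub> g) $$ (i,j) * \<rho> (inv\<^bsub>G\<^esub> g) $$ (k,l))"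
    proof (rule sum.cong[OF refl])
      fix g assume g: "g \<in> carrier G"
      have "inv\<^bsub>G\<^esub> (h \<otimes>\<^bsub>G\<^esub> g) \<otimes>\<^bsub>G\<^esub> h = inv\<^bsub>G\<^esub> g"
        using g h by (simp add: inv_mult_group m_assoc)
      then show "\<rho> (h \<otimes>\<^bsub>G\<^esub> g) $$ (i,j) * \<rho> (inv\<^bsub>G\<^esub> (h \<otimes>\<^bsub>G\<^esub> g) \<otimes>\<^bsub>G\<^esub> h) $$ (k,l)
         = \<rho> (h \<otimes>\<^bsub>G\<^esub> g) $$ (i,j) * \<rho> (inv\<^bsub>G\<^esub> g) $$ (k,l)" by simp
    qed
    finally show "(T * \<rho> h) $$ (i,l) = (\<rho> h * T) $$ (i,l)" using L by simp
  qed (use Tc rc[OF h] in auto)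
  obtain c where Tc1: "T = c \<cdot>\<^sub>m 1\<^sub>m n" using schur_lemma[OF irr Tc comm] by auto
  have "(\<Sum>i<n. S i i) = (\<Sum>g\<in>carrier G. \<Sum>i<n. \<rho> (inv\<^bsub>G\<^esub> g) $$ (k,i) * \<rho> g $$ (i,j))"
    unfolding S_def by (subst sum.swap) (simp add: mult.commute)
  also have "\<dots> = (\<Sum>g\<in>carrier G. (\<rho> (inv\<^bsub>G\<^esub> g) * \<rho> g) $$ (k,j))"
    by (rule sum.cong[OF refl]) (simp add: mult_entry[OF rc[OF inv_closed] rc jk(2) jk(1)])
  also have "\<dots> = (\<Sum>g\<in>carrier G. (1\<^sub>m n) $$ (k,j))"
    by (rule sum.cong[OF refl]) (simp add: rep_inv[OF grp rep])
  also have "\<dots> = (if k = j then of_nat (card (carrier G)) else 0)" using jk by simp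
  finally have trS: "(\<Sum>i<n. S i i) = (if k = j then of_nat (card (carrier G)) else 0)" .
  have Sii: "S i l = (if i = l then c else 0)" if "i < n" "l < n" for i l
  proof -
    have "S i l = T $$ (i,l)" using that by (simp add: T_def)
    then show ?thesis using that Tc1 by simp
  qed
  have "(\<Sum>i<n. S i i) = of_nat n * c" using Sii by simp
  then have cval: "c = (if k = j then of_nat (card (carrier G)) else 0) / of_nat n"
    using trS n0 by (simp add: field_simps)
  fix i l assume "i < n" "l < n"
  then show "S i l = (if i = l \<and> k = j then of_nat (card (carrier G)) / of_nat n else 0)"
    using Sii cval by auto
qed

lemma char_orth:
  assumes grp: "group G" and fin: "finite (carrier G)" and irr: "irreducible_rep G n \<rho>"
  shows "(\<Sum>g\<in>carrier G. mat_trace (\<rho> g) * mat_trace (\<rho> (inv\<^bsub>G\<^esub> g))) = of_nat (card (carrier G))"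
proof -
  interpret group G by fact
  have rep: "is_rep G n \<rho>" using irr unfolding irreducible_rep_def by auto
  have n0: "0 < n" using rep unfolding is_rep_def by auto
  note rc = rep_carrier[OF rep]
  have "(\<Sum>g\<in>carrier G. mat_trace (\<rho> g) * mat_trace (\<rho> (inv\<^bsub>G\<^esub> g)))
     = (\<Sum>g\<in>carrier G. \<Sum>i<n. \<Sum>k<n. \<rho> g $$ (i,i) * \<rho> (inv\<^bsub>G\<^esub> g) $$ (k,k))"
  proof (rule sum.cong[OF refl])
    fix g assume g: "g \<in> carrier G"
    have d1: "dim_row (\<rho> g) = n" using rc[OF g] by simp
    have d2: "dim_row (\<rho> (inv\<^bsub>G\<^esub> g)) = n" using rc[OF inv_closed[OF g]] by simp
    show "mat_trace (\<rho> g) * mat_trace (\<rho> (inv\<^bsub>G\<^esub> g)) = (\<Sum>i<n. \<Sum>k<n. \<rho> g $$ (i,i) * \<rho> (inv\<^bsub>G\<^esub> g) $$ (k,k))"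
      unfolding mat_trace_def d1 d2 by (rule sum_product)
  qed
  also have "\<dots> = (\<Sum>i<n. \<Sum>g\<in>carrier G. \<Sum>k<n. \<rho> g $$ (i,i) * \<rho> (inv\<^bsub>G\<^esub> g) $$ (k,k))"
    by (rule sum.swap)
  also have "\<dots> = (\<Sum>i<n. \<Sum>k<n. \<Sum>g\<in>carrier G. \<rho> g $$ (i,i) * \<rho> (inv\<^bsub>G\<^esub> g) $$ (k,k))"
    by (rule sum.cong[OF refl], rule sum.swap)
  also have "\<dots> = (\<Sum>i<n. \<Sum>k<n. (if i = k \<and> k = i then of_nat (card (carrier G)) / of_nat n else 0))"
  proof (rule sum.cong[OF refl], rule sum.cong[OF refl])
    fix i k assume "i \<in> {..<n}" "k \<in> {..<n}"
    then show "(\<Sum>g\<in>carrier G. \<rho> g $$ (i,i) * \<rho> (inv\<^bsub>G\<^esub> g) $$ (k,k))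
      = (if i = k \<and> k = i then of_nat (card (carrier G)) / of_nat n else 0)"
      using orth_key[OF grp fin irr, of i k i k] by simp
  qed
  also have "\<dots> = (\<Sum>i<n. of_nat (card (carrier G)) / of_nat n)"
  proof (rule sum.cong[OF refl])
    fix i assume "i \<in> {..<n}"
    have "(\<Sum>k<n. (if i = k \<and> k = i then of_nat (card (carrier G)) / of_nat n else (0::complex)))
       = (\<Sum>k<n. (if i = k then of_nat (card (carrier G)) / of_nat n else 0))"
      by (rule sum.cong) auto
    also have "\<dots> = of_nat (card (carrier G)) / of_nat n" using \<open>i \<in> {..<n}\<close> by (simp add: sum.delta)
    finally show "(\<Sum>k<n. (if i = k \<and> k = i then of_nat (card (carrier G)) / of_nat n else (0::complex)))
       = of_nat (card (carrier G)) / of_nat n" .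
  qed
  also have "\<dots> = of_nat (card (carrier G))" using n0 by simp
  finally show ?thesis .
qed

lemma mat_trace_smult:
  assumes "M \<in> carrier_mat n n"
  shows "mat_trace (a \<cdot>\<^sub>m M) = a * mat_trace M"
  unfolding mat_trace_def sum_distrib_left using assms by (intro sum.cong) auto

lemma gvz_card:
  assumes grp: "group G" and fin: "finite (carrier G)" and gvz: "GVZ G"
    and irr: "irreducible_rep G n \<rho>"
    and chi: "\<chi> = (\<lambda>g. if g \<in> carrier G then mat_trace (\<rho> g) else 0)"
  shows "card (carrier G) = n^2 * card (Zchar G \<chi>)"
proof -
  interpret group G by fact
  have rep: "is_rep G n \<rho>" using irr unfolding irreducible_rep_def by auto
  have n0: "0 < n" using rep unfolding is_rep_def by auto
  note rc = rep_carrier[OF rep]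
  have Irr: "\<chi> \<in> Irr G" unfolding Irr_def using irr chi by blast
  have chi1: "\<chi> \<one>\<^bsub>G\<^esub> = of_nat n" using rep_one[OF rep] chi by (simp add: mat_trace_def)
  define Z where "Z = Zchar G \<chi>"
  have ZG: "Z \<subseteq> carrier G" by (auto simp: Z_def Zchar_def)
  have zero: "mat_trace (\<rho> g) = 0" if "g \<in> carrier G - Z" for g
    using gvz Irr that chi unfolding GVZ_def Z_def by auto
  have nsq: "mat_trace (\<rho> g) * mat_trace (\<rho> (inv\<^bsub>G\<^esub> g)) = of_nat n ^ 2" if g: "g \<in> Z" for g
  proof -
    have gc: "g \<in> carrier G" using g ZG by auto
    have "cmod (mat_trace (\<rho> g)) = real n"
      using g chi1 gc unfolding Z_def Zchar_def chi by simp
    then obtain a where a: "\<rho> g = a \<cdot>\<^sub>m 1\<^sub>m n"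
      using scalar_of_finite_order[OF rc[OF gc] rep_order_pow(2)[OF grp fin rep gc] rep_order_pow(1)[OF grp fin rep gc]]
      by auto
    have ic: "\<rho> (inv\<^bsub>G\<^esub> g) \<in> carrier_mat n n" using rc[OF inv_closed[OF gc]] .
    have "1\<^sub>m n = \<rho> (inv\<^bsub>G\<^esub> g) * \<rho> g" using rep_inv[OF grp rep gc] by simp
    also have "\<dots> = a \<cdot>\<^sub>m (\<rho> (inv\<^bsub>G\<^esub> g) * 1\<^sub>m n)" unfolding a using mult_smult_distrib[OF ic one_carrier_mat] .
    also have "\<dots> = a \<cdot>\<^sub>m \<rho> (inv\<^bsub>G\<^esub> g)" using ic by simp
    finally have "mat_trace (1\<^sub>m n) = a * mat_trace (\<rho> (inv\<^bsub>G\<^esub> g))" by (simp add: mat_trace_smult[OF ic])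
    then have t2: "a * mat_trace (\<rho> (inv\<^bsub>G\<^esub> g)) = of_nat n" by (simp add: mat_trace_def)
    have t1: "mat_trace (\<rho> g) = of_nat n * a" unfolding a by (rule mat_trace_smult_one)
    show ?thesis unfolding t1 using t2 by (simp add: power2_eq_square mult.assoc)
  qed
  have "of_nat (card (carrier G)) = (\<Sum>g\<in>carrier G. mat_trace (\<rho> g) * mat_trace (\<rho> (inv\<^bsub>G\<^esub> g)))"
    using char_orth[OF grp fin irr] by simp
  also have "\<dots> = (\<Sum>g\<in>Z. mat_trace (\<rho> g) * mat_trace (\<rho> (inv\<^bsub>G\<^esub> g)))"
    by (rule sum.mono_neutral_right[OF fin ZG]) (use zero in auto)
  also have "\<dots> = (\<Sum>g\<in>Z. (of_nat n ^ 2 :: complex))" by (rule sum.cong[OF refl]) (rule nsq)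
  also have "\<dots> = of_nat (n^2 * card Z)" by simp
  finally have "(of_nat (card (carrier G)) :: complex) = of_nat (n^2 * card Z)" .
  then show ?thesis unfolding Z_def using of_nat_eq_iff by blast
qed

lemma trivial_in_cd:
  assumes grp: "group G"
  shows "1 \<in> cd G"
proof -
  interpret group G by fact
  define \<rho> where "\<rho> = (\<lambda>g::'a. 1\<^sub>m 1 :: complex mat)"
  have rep: "is_rep G 1 \<rho>" unfolding is_rep_def \<rho>_def by auto
  have noW: "\<not> nontriv_invariant_subspace G 1 \<rho> W" for W
  proof
    assume W: "nontriv_invariant_subspace G 1 \<rho> W"
    have Wc: "W \<subseteq> carrier_vec 1" and sm: "\<And>c w. w \<in> W \<Longrightarrow> c \<cdot>\<^sub>v w \<in> W"
      and n0: "W \<noteq> {0\<^sub>v 1}" and z: "0\<^sub>v 1 \<in> W" and nc: "W \<noteq> carrier_vec 1"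
      using W unfolding nontriv_invariant_subspace_def by auto
    obtain w where w: "w \<in> W" "w \<noteq> 0\<^sub>v 1" using n0 z by blast
    have wc: "w \<in> carrier_vec 1" using w Wc by auto
    have w0: "w $ 0 \<noteq> 0"
    proof
      assume "w $ 0 = 0"
      then have "w = 0\<^sub>v 1" using wc by (intro eq_vecI) auto
      then show False using w by simp
    qed
    have "carrier_vec 1 \<subseteq> W"
    proof
      fix v :: "complex vec" assume v: "v \<in> carrier_vec 1"
      have "v = (v $ 0 / w $ 0) \<cdot>\<^sub>v w" using v wc w0 by (intro eq_vecI) auto
      then show "v \<in> W" using sm[OF w(1)] by metis
    qed
    then show False using Wc nc by blast
  qed
  have irr: "irreducible_rep G 1 \<rho>" unfolding irreducible_rep_def using rep noW by blast
  define \<chi> where "\<chi> = (\<lambda>g. if g \<in> carrier G then mat_trace (\<rho> g) else 0)"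
  have "\<chi> \<in> Irr G" unfolding Irr_def \<chi>_def using irr by blast
  moreover have "\<chi> \<one>\<^bsub>G\<^esub> = 1" by (simp add: \<chi>_def \<rho>_def mat_trace_def)
  ultimately show ?thesis unfolding cd_def by force
qed

lemma smult_one_pow: "(c \<cdot>\<^sub>m 1\<^sub>m n) ^\<^sub>m k = (c ^ k :: complex) \<cdot>\<^sub>m 1\<^sub>m n"
proof (induction k)
  case 0 then show ?case by (simp, rule eq_matI) auto
next
  case (Suc k)
  have "(c \<cdot>\<^sub>m 1\<^sub>m n) ^\<^sub>m Suc k = (c ^ k \<cdot>\<^sub>m 1\<^sub>m n) * (c \<cdot>\<^sub>m 1\<^sub>m n)" using Suc by simp
  also have "\<dots> = (c ^ Suc k) \<cdot>\<^sub>m 1\<^sub>m n" by (rule eq_matI) auto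
  finally show ?case .
qed

lemma scalar_comm:
  fixes c :: complex
  assumes "B \<in> carrier_mat n n"
  shows "(c \<cdot>\<^sub>m 1\<^sub>m n) * B = B * (c \<cdot>\<^sub>m 1\<^sub>m n)"
proof -
  have "(c \<cdot>\<^sub>m 1\<^sub>m n) * B = c \<cdot>\<^sub>m (1\<^sub>m n * B)" using mult_smult_assoc_mat[OF one_carrier_mat assms] .
  also have "\<dots> = c \<cdot>\<^sub>m B" using assms by simp
  also have "\<dots> = c \<cdot>\<^sub>m (B * 1\<^sub>m n)" using assms by simp
  also have "\<dots> = B * (c \<cdot>\<^sub>m 1\<^sub>m n)" using mult_smult_distrib[OF assms one_carrier_mat] by simp
  finally show ?thesis .
qed

lemma main_aux:
  fixes G :: "('a, 'b) monoid_scheme" (structure) and \<chi> :: "'a \<Rightarrow> complex" and X :: "'a set"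
  assumes "group G" and "finite (carrier G)" and "GVZ G"
    and "card (cd G) = 2"
    and "\<chi> \<in> nl G"
    and "X \<in> {Zchar G \<psi> | \<psi>. \<psi> \<in> nl G}"
  shows "Zchar G \<chi> = X \<longleftrightarrow> commutator_sub G X \<subseteq> kerchar G \<chi>"
proof -
  note grp = assms(1) and fin = assms(2) and gvz = assms(3)
  interpret group G by fact
  obtain n \<rho> where irr: "irreducible_rep G n \<rho>"
     and chi: "\<chi> = (\<lambda>g. if g \<in> carrier G then mat_trace (\<rho> g) else 0)"
    using assms(5) unfolding nl_def Irr_def by blast
  obtain \<psi> where psi: "\<psi> \<in> nl G" and X: "X = Zchar G \<psi>" using assms(6) by blast
  obtain n' \<rho>' where irr': "irreducible_rep G n' \<rho>'"
     and psi': "\<psi> = (\<lambda>g. if g \<in> carrier G then mat_trace (\<rho>' g) else 0)"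
    using psi unfolding nl_def Irr_def by blast
  have rep: "is_rep G n \<rho>" using irr unfolding irreducible_rep_def by auto
  have rep': "is_rep G n' \<rho>'" using irr' unfolding irreducible_rep_def by auto
  have n0: "0 < n" using rep unfolding is_rep_def by auto
  note rc = rep_carrier[OF rep]
  have chi1: "\<chi> \<one>\<^bsub>G\<^esub> = of_nat n" using rep_one[OF rep] chi by (simp add: mat_trace_def)
  have psi1: "\<psi> \<one>\<^bsub>G\<^esub> = of_nat n'" using rep_one[OF rep'] psi' by (simp add: mat_trace_def)
  have chiI: "\<chi> \<in> Irr G" and chin1: "\<chi> \<one>\<^bsub>G\<^esub> \<noteq> 1" using assms(5) unfolding nl_def by auto
  have psiI: "\<psi> \<in> Irr G" and psin1: "\<psi> \<one>\<^bsub>G\<^esub> \<noteq> 1" using psi unfolding nl_def by auto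
  have nn': "n = n'"
  proof (rule ccontr)
    assume ne: "n \<noteq> n'"
    have "of_nat n \<in> cd G" unfolding cd_def using image_eqI[of _ "\<lambda>\<chi>. \<chi> \<one>\<^bsub>G\<^esub>", OF chi1[symmetric] chiI] .
    moreover have "of_nat n' \<in> cd G" unfolding cd_def using image_eqI[of _ "\<lambda>\<chi>. \<chi> \<one>\<^bsub>G\<^esub>", OF psi1[symmetric] psiI] .
    ultimately have sub: "{1, of_nat n, of_nat n'} \<subseteq> cd G" using trivial_in_cd[OF grp] by simp
    have fcd: "finite (cd G)" using assms(4) by (metis card.infinite zero_neq_numeral)
    have "card {1::complex, of_nat n, of_nat n'} = 3"
      using ne chin1 psin1 chi1 psi1 by simp
    then have "3 \<le> card (cd G)" using card_mono[OF fcd sub] by simp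
    then show False using assms(4) by simp
  qed
  have XG: "X \<subseteq> carrier G" by (auto simp: X Zchar_def)
  define S where "S = {inv\<^bsub>G\<^esub> x \<otimes>\<^bsub>G\<^esub> inv\<^bsub>G\<^esub> g \<otimes>\<^bsub>G\<^esub> x \<otimes>\<^bsub>G\<^esub> g | x g. x \<in> X \<and> g \<in> carrier G}"
  have comm_def: "commutator_sub G X = generate G S" unfolding commutator_sub_def S_def ..
  have ident: "inv x \<otimes> inv g \<otimes> x \<otimes> g = inv (g \<otimes> x) \<otimes> (x \<otimes> g)"
    if "x \<in> carrier G" "g \<in> carrier G" for x g
    using that by (simp add: inv_mult_group m_assoc)
  have ident2: "x \<otimes> g = (g \<otimes> x) \<otimes> (inv x \<otimes> inv g \<otimes> x \<otimes> g)"
    if "x \<in> carrier G" "g \<in> carrier G" for x g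
  proof -
    have cancel: "a \<otimes> (inv a \<otimes> y) = y" if "a \<in> carrier G" "y \<in> carrier G" for a y
      using that by (simp add: m_assoc[symmetric])
    show ?thesis using that by (simp add: m_assoc cancel)
  qed
  have tr_chi: "\<chi> g = mat_trace (\<rho> g)" if "g \<in> carrier G" for g using that chi by simp
  have ord: "\<rho> g ^\<^sub>m Coset.order G = 1\<^sub>m n" "Coset.order G > 0" if "g \<in> carrier G" for g
    using rep_order_pow[OF grp fin rep that] by auto
  show ?thesis
  proof
    assume Z: "Zchar G \<chi> = X"
    define K where "K = {g \<in> carrier G. \<rho> g = 1\<^sub>m n}"
    have SK: "S \<subseteq> K"
    proof
      fix c assume "c \<in> S"
      then obtain x g where c: "c = inv x \<otimes> inv g \<otimes> x \<otimes> g" and x: "x \<in> X" and g: "g \<in> carrier G"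
        unfolding S_def by blast
      have xc: "x \<in> carrier G" using x XG by auto
      have "cmod (mat_trace (\<rho> x)) = real n"
        using x Z xc chi1 tr_chi[OF xc] unfolding Zchar_def by auto
      then obtain a where a: "\<rho> x = a \<cdot>\<^sub>m 1\<^sub>m n"
        using scalar_of_finite_order[OF rc[OF xc] ord(2)[OF xc] ord(1)[OF xc]] by auto
      have "\<rho> (x \<otimes> g) = \<rho> (g \<otimes> x)"
        using rep_mult[OF rep xc g] rep_mult[OF rep g xc] scalar_comm[OF rc[OF g]] a by simp
      then have "\<rho> c = 1\<^sub>m n"
        unfolding c ident[OF xc g] using rep_mult[OF rep inv_closed m_closed] rep_inv[OF grp rep m_closed[OF g xc]] xc g
        by simp
      then show "c \<in> K" using c xc g by (simp add: K_def)
    qed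
    have "generate G S \<subseteq> K"
    proof
      fix h assume "h \<in> generate G S"
      then show "h \<in> K"
      proof (induction rule: generate.induct)
        case one then show ?case using rep_one[OF rep] by (simp add: K_def)
      next
        case (incl h) then show ?case using SK by blast
      next
        case (inv h)
        then have hK: "h \<in> K" using SK by blast
        then have hc: "h \<in> carrier G" by (simp add: K_def)
        have "\<rho> (inv h) = \<rho> (inv h) * \<rho> h" using hK rc[OF inv_closed[OF hc]] by (simp add: K_def)
        then show ?case using rep_inv[OF grp rep hc] hc by (simp add: K_def)
      next
        case (eng h1 h2)
        then show ?case using rep_mult[OF rep] by (simp add: K_def)
      qed
    qed
    moreover have "K \<subseteq> kerchar G \<chi>"
      using chi1 tr_chi by (auto simp: K_def kerchar_def mat_trace_def)
    ultimately show "commutator_sub G X \<subseteq> kerchar G \<chi>" unfolding comm_def by blast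
  next
    assume ker: "commutator_sub G X \<subseteq> kerchar G \<chi>"
    have XZ: "X \<subseteq> Zchar G \<chi>"
    proof
      fix x assume x: "x \<in> X"
      have xc: "x \<in> carrier G" using x XG by auto
      have commute: "\<rho> x * \<rho> g = \<rho> g * \<rho> x" if g: "g \<in> carrier G" for g
      proof -
        define c where "c = inv x \<otimes> inv g \<otimes> x \<otimes> g"
        have cc: "c \<in> carrier G" using xc g by (simp add: c_def)
        have "c \<in> S" unfolding S_def c_def using x g by blast
        then have "c \<in> kerchar G \<chi>" using ker unfolding comm_def by (auto intro: generate.incl)
        then have "mat_trace (\<rho> c) = of_nat n" using chi1 tr_chi[OF cc] by (simp add: kerchar_def)
        moreover obtain a where a: "\<rho> c = a \<cdot>\<^sub>m 1\<^sub>m n"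
          using scalar_of_finite_order[OF rc[OF cc] ord(2)[OF cc] ord(1)[OF cc]] calculation by auto
        ultimately have "of_nat n * a = of_nat n" using mat_trace_smult_one by metis
        then have "a = 1" using n0 by simp
        moreover have "(1::complex) \<cdot>\<^sub>m 1\<^sub>m n = 1\<^sub>m n" by (rule eq_matI) auto
        ultimately have rc1: "\<rho> c = 1\<^sub>m n" using a by simp
        have "\<rho> x * \<rho> g = \<rho> (x \<otimes> g)" using rep_mult[OF rep xc g] by simp
        also have "\<dots> = \<rho> ((g \<otimes> x) \<otimes> c)" using ident2[OF xc g] by (simp add: c_def)
        also have "\<dots> = \<rho> (g \<otimes> x) * \<rho> c" using rep_mult[OF rep m_closed[OF g xc] cc] .
        also have "\<dots> = \<rho> g * \<rho> x" using rc1 rep_mult[OF rep g xc] rc[OF g] rc[OF xc] by simp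
        finally show ?thesis .
      qed
      obtain b where b: "\<rho> x = b \<cdot>\<^sub>m 1\<^sub>m n"
        using schur_lemma[OF irr rc[OF xc] commute] by auto
      have "(b ^ Coset.order G) \<cdot>\<^sub>m 1\<^sub>m n = 1\<^sub>m n" using ord(1)[OF xc] b smult_one_pow by metis
      then have "((b ^ Coset.order G) \<cdot>\<^sub>m 1\<^sub>m n) $$ (0,0) = 1\<^sub>m n $$ (0,0)" by simp
      then have "b ^ Coset.order G = 1" using n0 by simp
      then have "cmod b = 1" using power_eq_1_iff[of b "Coset.order G"] ord(2)[OF xc] by auto
      then have "cmod (mat_trace (\<rho> x)) = real n" using b mat_trace_smult_one by (simp add: norm_mult)
      then show "x \<in> Zchar G \<chi>" using xc chi1 tr_chi[OF xc] by (simp add: Zchar_def)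
    qed
    have c1: "card (carrier G) = n^2 * card (Zchar G \<chi>)" using gvz_card[OF grp fin gvz irr chi] .
    have c2: "card (carrier G) = n^2 * card X" using gvz_card[OF grp fin gvz irr' psi'] nn' X by simp
    have "card (Zchar G \<chi>) = card X" using c1 c2 n0 by simp
    moreover have "finite (Zchar G \<chi>)" using fin by (rule rev_finite_subset) (auto simp: Zchar_def)
    ultimately show "Zchar G \<chi> = X" using XZ card_subset_eq by metis
  qed
qed

theorem mainTheorem8:
  fixes G :: "('a, 'b) monoid_scheme" and \<chi> :: "'a \<Rightarrow> complex" and X :: "'a set"
  assumes "group G" and "finite (carrier G)" and "GVZ G"
    and "card (cd G) = 2"
    and "\<chi> \<in> nl G"
    and "X \<in> {Zchar G \<psi> | \<psi>. \<psi> \<in> nl G}"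
  shows "Zchar G \<chi> = X \<longleftrightarrow> commutator_sub G X \<subseteq> kerchar G \<chi>"
  by (rule main_aux[OF assms])

end
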